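(* Let $K$ be a field. (i) If $\alpha=\beta+1$ is a countable non-limit ordinal, then there is a $K$-algebra isomorphism $B_{\alpha,1}\cong B_{\beta,1}\boxplus B_{\alpha,1}$. (ii) If $\gamma\ge0$ is a countable ordinal and $\alpha=\gamma+n$ for some $0<n<\omega$, then there is a $K$-algebra isomorphism $B_{\alpha,1}\cong B_{\gamma,1}\boxplus B_{\alpha,1}$. (iii) If $\alpha$ is a countable limit ordinal and $\beta<\alpha$, then there is a $K$-algebra isomorphism $B_{\alpha,1}\cong B_{\beta,1}\boxplus B_{\alpha,1}$.
   Context: For a sequence $\mathcal R=(R_i\mid i\in A)$ of $K$-algebras indexed by an infinite set $A$, $R(A,K,\mathcal R)$ is the $K$-subalgebra $\bigoplus_{i\in A}R_i\oplus1_P\cdot K$ of $P=\prod_{i\in A}R_i$; $\boxplus$ is ring direct product. Define $B_{0,1}=K$; $B_{\beta+1,1}=R(\aleph_0,K,\mathcal R)$ with $\mathcal R$ the constant sequence $R_m=B_{\beta,1}$ ($m<\aleph_0$); for limit $\alpha$, $B_{\alpha,1}=R(\alpha,K,(B_{\beta,1}\mid\beta<\alpha))$. *)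

theory Defs
  imports "HOL-Algebra.Algebra"
begin

(* Ordinals are represented as elements of an arbitrary well-ordered type 'o.
   An element alpha is an ordinal via the order type of {beta. beta < alpha}. *)

definition is_zero_ord :: "'o::wellorder \<Rightarrow> bool" where
  "is_zero_ord \<alpha> \<longleftrightarrow> (\<forall>\<beta>. \<not> \<beta> < \<alpha>)"

definition is_succ_of :: "'o::wellorder \<Rightarrow> 'o \<Rightarrow> bool" where
  "is_succ_of \<alpha> \<beta> \<longleftrightarrow> \<beta> < \<alpha> \<and> (\<forall>\<gamma>. \<beta> < \<gamma> \<longrightarrow> \<alpha> \<le> \<gamma>)"

definition is_limit_ord :: "'o::wellorder \<Rightarrow> bool" where
  "is_limit_ord \<alpha> \<longleftrightarrow> (\<exists>\<beta>. \<beta> < \<alpha>) \<and> (\<forall>\<beta>. \<not> is_succ_of \<alpha> \<beta>)"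

definition countable_ord :: "'o::wellorder \<Rightarrow> bool" where
  "countable_ord \<alpha> \<longleftrightarrow> countable {\<beta>. \<beta> < \<alpha>}"

inductive plus_nat_ord :: "'o::wellorder \<Rightarrow> nat \<Rightarrow> 'o \<Rightarrow> bool" where
  "plus_nat_ord \<gamma> 0 \<gamma>"
| "plus_nat_ord \<gamma> n \<delta> \<Longrightarrow> is_succ_of \<alpha> \<delta> \<Longrightarrow> plus_nat_ord \<gamma> (Suc n) \<alpha>"

(* The algebra B_{alpha,1} is realised inside K^(X_alpha) with pointwise operations,
   where X_0 = {[]}, X_{beta+1} = nat \<times> X_beta (coded as Inr m # p),
   X_lambda = Sum_{beta<lambda} X_beta (coded as Inl beta # p).
   An element (r_i) of the product prod_i R_i is the function whose slice at i is r_i. *)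

inductive leaf :: "'o::wellorder \<Rightarrow> ('o + nat) list \<Rightarrow> bool" where
  leaf_zero: "is_zero_ord \<alpha> \<Longrightarrow> leaf \<alpha> []"
| leaf_succ: "is_succ_of \<alpha> \<beta> \<Longrightarrow> leaf \<beta> p \<Longrightarrow> leaf \<alpha> (Inr m # p)"
| leaf_limit: "is_limit_ord \<alpha> \<Longrightarrow> \<beta> < \<alpha> \<Longrightarrow> leaf \<beta> p \<Longrightarrow> leaf \<alpha> (Inl \<beta> # p)"

definition unitB :: "'o::wellorder \<Rightarrow> ('o + nat) list \<Rightarrow> 'k::field" where
  "unitB \<alpha> = (\<lambda>p. if leaf \<alpha> p then 1 else 0)"

inductive inB :: "'o::wellorder \<Rightarrow> (('o + nat) list \<Rightarrow> 'k::field) \<Rightarrow> bool" where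
  inB_zero: "is_zero_ord \<alpha> \<Longrightarrow> (\<forall>p. p \<noteq> [] \<longrightarrow> f p = 0) \<Longrightarrow> inB \<alpha> f"
| inB_succ: "is_succ_of \<alpha> \<beta> \<Longrightarrow> (\<forall>p. \<not> leaf \<alpha> p \<longrightarrow> f p = 0)
     \<Longrightarrow> (\<forall>m. inB \<beta> (\<lambda>p. f (Inr m # p)))
     \<Longrightarrow> (\<exists>c. finite {m::nat. (\<lambda>p. f (Inr m # p)) \<noteq> (\<lambda>p. c * unitB \<beta> p)})
     \<Longrightarrow> inB \<alpha> f"
| inB_limit: "is_limit_ord \<alpha> \<Longrightarrow> (\<forall>p. \<not> leaf \<alpha> p \<longrightarrow> f p = 0)
     \<Longrightarrow> (\<forall>\<beta><\<alpha>. inB \<beta> (\<lambda>p. f (Inl \<beta> # p)))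
     \<Longrightarrow> (\<exists>c. finite {\<beta>. \<beta> < \<alpha> \<and> (\<lambda>p. f (Inl \<beta> # p)) \<noteq> (\<lambda>p. c * unitB \<beta> p)})
     \<Longrightarrow> inB \<alpha> f"

definition Balg :: "'o::wellorder \<Rightarrow> (('o + nat) list \<Rightarrow> 'k::field) ring" where
  "Balg \<alpha> = \<lparr> carrier = {f. inB \<alpha> f},
               monoid.mult = (\<lambda>f g p. f p * g p),
               one = unitB \<alpha>,
               ring.zero = (\<lambda>p. 0),
               add = (\<lambda>f g p. f p + g p) \<rparr>"

definition smultB :: "'k::field \<Rightarrow> ('x \<Rightarrow> 'k) \<Rightarrow> ('x \<Rightarrow> 'k)" where
  "smultB c f = (\<lambda>p. c * f p)"

definition kalg_iso_prod ::
  "(('o + nat) list \<Rightarrow> 'k::field) ring \<Rightarrow> (('o + nat) list \<Rightarrow> 'k) ring \<Rightarrow> (('o + nat) list \<Rightarrow> 'k) ring \<Rightarrow> bool" where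
  "kalg_iso_prod A B C \<longleftrightarrow> (\<exists>h. h \<in> ring_iso A (RDirProd B C) \<and>
      (\<forall>c f. f \<in> carrier A \<longrightarrow> h (smultB c f) = (smultB c (fst (h f)), smultB c (snd (h f)))))"

end

theory Submission
  imports Defs
begin

lemma RDP_simps:
  "carrier (RDirProd R S) = carrier R \<times> carrier S"
  "x \<otimes>\<^bsub>RDirProd R S\<^esub> y = (fst x \<otimes>\<^bsub>R\<^esub> fst y, snd x \<otimes>\<^bsub>S\<^esub> snd y)"
  "x \<oplus>\<^bsub>RDirProd R S\<^esub> y = (fst x \<oplus>\<^bsub>R\<^esub> fst y, snd x \<oplus>\<^bsub>S\<^esub> snd y)"
  "\<one>\<^bsub>RDirProd R S\<^esub> = (\<one>\<^bsub>R\<^esub>, \<one>\<^bsub>S\<^esub>)"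
  by (auto simp: RDirProd_def DirProd_def monoid.defs case_prod_beta)

lemma kalg_isoI:
  fixes A B C :: "(('o + nat) list \<Rightarrow> 'k::field) ring"
  assumes car: "\<And>f. f \<in> carrier A \<Longrightarrow> H f \<in> carrier B \<times> carrier C"
  and mul: "\<And>f g. f \<in> carrier A \<Longrightarrow> g \<in> carrier A \<Longrightarrow>
      H (f \<otimes>\<^bsub>A\<^esub> g) = (fst (H f) \<otimes>\<^bsub>B\<^esub> fst (H g), snd (H f) \<otimes>\<^bsub>C\<^esub> snd (H g))"
  and add: "\<And>f g. f \<in> carrier A \<Longrightarrow> g \<in> carrier A \<Longrightarrow>
      H (f \<oplus>\<^bsub>A\<^esub> g) = (fst (H f) \<oplus>\<^bsub>B\<^esub> fst (H g), snd (H f) \<oplus>\<^bsub>C\<^esub> snd (H g))"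
  and one: "H \<one>\<^bsub>A\<^esub> = (\<one>\<^bsub>B\<^esub>, \<one>\<^bsub>C\<^esub>)"
  and Gcar: "\<And>x. x \<in> carrier B \<times> carrier C \<Longrightarrow> G x \<in> carrier A"
  and HG: "\<And>x. x \<in> carrier B \<times> carrier C \<Longrightarrow> H (G x) = x"
  and GH: "\<And>f. f \<in> carrier A \<Longrightarrow> G (H f) = f"
  and sm: "\<And>c f. f \<in> carrier A \<Longrightarrow> H (smultB c f) = (smultB c (fst (H f)), smultB c (snd (H f)))"
  shows "kalg_iso_prod A B C"
  unfolding kalg_iso_prod_def
proof (intro exI conjI allI impI)
  show "H \<in> ring_iso A (RDirProd B C)"
    unfolding ring_iso_def ring_hom_def
  proof (intro CollectI conjI allI impI)
    show "H \<in> carrier A \<rightarrow> carrier (RDirProd B C)" using car by (auto simp: RDP_simps)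
    show "bij_betw H (carrier A) (carrier (RDirProd B C))"
      unfolding RDP_simps
      by (rule bij_betw_byWitness[where f'=G]) (use car Gcar HG GH in force)+
  qed (use mul add one in \<open>auto simp: RDP_simps\<close>)
qed (use sm in auto)


lemma succ_unique: "is_succ_of \<alpha> \<beta> \<Longrightarrow> is_succ_of \<alpha> \<beta>' \<Longrightarrow> \<beta> = \<beta>'"
  unfolding is_succ_of_def by (metis linorder_neqE not_le)

lemma zero_not_succ: "is_zero_ord \<alpha> \<Longrightarrow> \<not> is_succ_of \<alpha> \<beta>"
  unfolding is_zero_ord_def is_succ_of_def by auto

lemma zero_not_limit: "is_zero_ord \<alpha> \<Longrightarrow> \<not> is_limit_ord \<alpha>"
  unfolding is_zero_ord_def is_limit_ord_def by auto

lemma limit_not_succ: "is_limit_ord \<alpha> \<Longrightarrow> \<not> is_succ_of \<alpha> \<beta>"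
  unfolding is_limit_ord_def by auto

lemma leaf_Nil: "leaf \<alpha> [] \<longleftrightarrow> is_zero_ord \<alpha>"
  by (auto elim: leaf.cases intro: leaf.intros)

lemma leaf_Inr_succ: "is_succ_of \<alpha> \<beta> \<Longrightarrow> leaf \<alpha> (Inr m # q) \<longleftrightarrow> leaf \<beta> q"
  by (auto elim: leaf.cases intro: leaf.intros dest: succ_unique)

lemma leaf_Inl_succ: "is_succ_of \<alpha> \<beta> \<Longrightarrow> \<not> leaf \<alpha> (Inl d # q)"
  by (auto elim: leaf.cases dest: limit_not_succ)

lemma leaf_Inl_limit: "is_limit_ord \<alpha> \<Longrightarrow> leaf \<alpha> (Inl d # q) \<longleftrightarrow> d < \<alpha> \<and> leaf d q"
  by (auto elim: leaf.cases intro: leaf.intros)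

lemma leaf_Inr_limit: "is_limit_ord \<alpha> \<Longrightarrow> \<not> leaf \<alpha> (Inr m # q)"
  by (auto elim: leaf.cases dest: limit_not_succ)

lemma inB_support: "inB \<alpha> f \<Longrightarrow> \<not> leaf \<alpha> p \<Longrightarrow> f p = 0"
  by (induct rule: inB.induct) (metis leaf_Nil)+

lemma inB_succ_iff: "is_succ_of \<alpha> \<beta> \<Longrightarrow> inB \<alpha> f \<longleftrightarrow>
   (\<forall>p. \<not> leaf \<alpha> p \<longrightarrow> f p = 0) \<and> (\<forall>m. inB \<beta> (\<lambda>p. f (Inr m # p)))
     \<and> (\<exists>c. finite {m::nat. (\<lambda>p. f (Inr m # p)) \<noteq> (\<lambda>p. c * unitB \<beta> p)})"
  apply (rule iffI)
   apply (erule inB.cases)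
     apply (auto dest: zero_not_succ limit_not_succ succ_unique)[3]
  apply (auto intro: inB_succ)
  done

lemma inB_limit_iff: "is_limit_ord \<alpha> \<Longrightarrow> inB \<alpha> f \<longleftrightarrow>
   (\<forall>p. \<not> leaf \<alpha> p \<longrightarrow> f p = 0) \<and> (\<forall>\<beta><\<alpha>. inB \<beta> (\<lambda>p. f (Inl \<beta> # p)))
     \<and> (\<exists>c. finite {\<beta>. \<beta> < \<alpha> \<and> (\<lambda>p. f (Inl \<beta> # p)) \<noteq> (\<lambda>p. c * unitB \<beta> p)})"
  apply (rule iffI)
   apply (erule inB.cases)
     apply (auto dest: zero_not_limit limit_not_succ)[3]
  apply (auto intro: inB_limit)
  done

lemma Balg_simps:
  "carrier (Balg \<alpha>) = {f. inB \<alpha> f}"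
  "f \<otimes>\<^bsub>Balg \<alpha>\<^esub> g = (\<lambda>p. f p * g p)"
  "f \<oplus>\<^bsub>Balg \<alpha>\<^esub> g = (\<lambda>p. f p + g p)"
  "\<one>\<^bsub>Balg \<alpha>\<^esub> = unitB \<alpha>"
  by (simp_all add: Balg_def)

lemma path_cases:
  obtains "p = []" | a q where "p = Inl a # q" | q where "p = Inr 0 # q" | m q where "p = Inr (Suc m) # q"
  by (metis list.exhaust not0_implies_Suc sumE)


definition sl :: "'a \<Rightarrow> ('a list \<Rightarrow> 'k) \<Rightarrow> 'a list \<Rightarrow> 'k" where
  "sl t f = (\<lambda>p. f (t # p))"

definition sh :: "(('o + nat) list \<Rightarrow> 'k) \<Rightarrow> ('o + nat) list \<Rightarrow> 'k" where
  "sh f p = (if p \<noteq> [] \<and> \<not> isl (hd p) then f (Inr (Suc (projr (hd p))) # tl p) else f p)"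

definition cmb :: "(('o + nat) list \<Rightarrow> 'k) \<Rightarrow> (('o + nat) list \<Rightarrow> 'k) \<Rightarrow> ('o + nat) list \<Rightarrow> 'k" where
  "cmb x g p = (if p \<noteq> [] \<and> hd p = Inr 0 then x (tl p)
     else if p \<noteq> [] \<and> \<not> isl (hd p) then g (Inr (projr (hd p) - 1) # tl p) else g p)"

lemma sh_simps [simp]: "sh f [] = f []" "sh f (Inl a # q) = f (Inl a # q)"
  "sh f (Inr m # q) = f (Inr (Suc m) # q)"
  by (simp_all add: sh_def)

lemma cmb_simps [simp]: "cmb x g [] = g []" "cmb x g (Inl a # q) = g (Inl a # q)"
  "cmb x g (Inr 0 # q) = x q" "cmb x g (Inr (Suc m) # q) = g (Inr m # q)"
  by (simp_all add: cmb_def)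

lemma sh_in:
  assumes s: "is_succ_of \<alpha> \<beta>" and f: "inB \<alpha> f"
  shows "inB \<alpha> (sh f)"
proof -
  from f s obtain c where sup: "\<forall>p. \<not> leaf \<alpha> p \<longrightarrow> f p = 0" and sl: "\<forall>m. inB \<beta> (\<lambda>p. f (Inr m # p))"
    and fin: "finite {m::nat. (\<lambda>p. f (Inr m # p)) \<noteq> (\<lambda>p. c * unitB \<beta> p)}"
    by (auto simp: inB_succ_iff)
  have "{m::nat. (\<lambda>p. sh f (Inr m # p)) \<noteq> (\<lambda>p. c * unitB \<beta> p)}
       = Suc -` {m::nat. (\<lambda>p. f (Inr m # p)) \<noteq> (\<lambda>p. c * unitB \<beta> p)}" by auto
  then have "finite {m::nat. (\<lambda>p. sh f (Inr m # p)) \<noteq> (\<lambda>p. c * unitB \<beta> p)}"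
    using finite_vimageI[OF fin, of Suc] by (simp add: vimage_def)
  moreover have "\<forall>p. \<not> leaf \<alpha> p \<longrightarrow> sh f p = 0"
  proof (intro allI impI)
    fix p assume "\<not> leaf \<alpha> p" then show "sh f p = 0"
      by (cases p rule: path_cases) (use sup s in \<open>auto simp: leaf_Inr_succ\<close>)
  qed
  ultimately show ?thesis using sl s by (auto simp: inB_succ_iff)
qed

lemma cmb_in:
  assumes s: "is_succ_of \<alpha> \<beta>" and x: "inB \<beta> x" and g: "inB \<alpha> g"
  shows "inB \<alpha> (cmb x g)"
proof -
  from g s obtain c where sup: "\<forall>p. \<not> leaf \<alpha> p \<longrightarrow> g p = 0" and sl: "\<forall>m. inB \<beta> (\<lambda>p. g (Inr m # p))"
    and fin: "finite {m::nat. (\<lambda>p. g (Inr m # p)) \<noteq> (\<lambda>p. c * unitB \<beta> p)}"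
    by (auto simp: inB_succ_iff)
  have "{m::nat. (\<lambda>p. cmb x g (Inr m # p)) \<noteq> (\<lambda>p. c * unitB \<beta> p)}
       \<subseteq> insert 0 (Suc ` {m::nat. (\<lambda>p. g (Inr m # p)) \<noteq> (\<lambda>p. c * unitB \<beta> p)})"
  proof
    fix m assume m: "m \<in> {m::nat. (\<lambda>p. cmb x g (Inr m # p)) \<noteq> (\<lambda>p. c * unitB \<beta> p)}"
    show "m \<in> insert 0 (Suc ` {m::nat. (\<lambda>p. g (Inr m # p)) \<noteq> (\<lambda>p. c * unitB \<beta> p)})"
    proof (cases m)
      case (Suc k)
      with m have "k \<in> {m::nat. (\<lambda>p. g (Inr m # p)) \<noteq> (\<lambda>p. c * unitB \<beta> p)}" by simp
      with Suc show ?thesis by blast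
    qed simp
  qed
  then have "finite {m::nat. (\<lambda>p. cmb x g (Inr m # p)) \<noteq> (\<lambda>p. c * unitB \<beta> p)}"
    using fin by (meson finite.insertI finite_imageI finite_subset)
  moreover have "\<forall>p. \<not> leaf \<alpha> p \<longrightarrow> cmb x g p = 0"
  proof (intro allI impI)
    fix p assume "\<not> leaf \<alpha> p" then show "cmb x g p = 0"
    proof (cases p rule: path_cases)
      case (3 q)
      then show ?thesis using \<open>\<not> leaf \<alpha> p\<close> inB_support[OF x, of q] by (simp add: leaf_Inr_succ[OF s])
    next
      case (4 m q)
      then show ?thesis using \<open>\<not> leaf \<alpha> p\<close> sup leaf_Inr_succ[OF s] by simp
    qed (use sup \<open>\<not> leaf \<alpha> p\<close> in simp_all)
  qed
  moreover have "\<forall>m. inB \<beta> (\<lambda>p. cmb x g (Inr m # p))"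
  proof
    fix m show "inB \<beta> (\<lambda>p. cmb x g (Inr m # p))"
      by (cases m) (use x sl in auto)
  qed
  ultimately show ?thesis using s by (auto simp: inB_succ_iff)
qed

lemma sh_unit: "is_succ_of \<alpha> \<beta> \<Longrightarrow> sh (unitB \<alpha>) = unitB \<alpha>"
  by (rule ext, case_tac x rule: path_cases) (auto simp: unitB_def leaf_Inr_succ)

lemma sl_unit_succ: "is_succ_of \<alpha> \<beta> \<Longrightarrow> sl (Inr m) (unitB \<alpha>) = unitB \<beta>"
  by (simp add: sl_def unitB_def leaf_Inr_succ)

lemma sl_unit_limit: "is_limit_ord \<alpha> \<Longrightarrow> d < \<alpha> \<Longrightarrow> sl (Inl d) (unitB \<alpha>) = unitB d"
  by (simp add: sl_def unitB_def leaf_Inl_limit)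

lemma shift_iso:
  assumes s: "is_succ_of \<alpha> \<beta>"
  shows "kalg_iso_prod (Balg \<alpha> :: (('o::wellorder + nat) list \<Rightarrow> 'k::field) ring) (Balg \<beta>) (Balg \<alpha>)"
proof (rule kalg_isoI[where H = "\<lambda>f::('o + nat) list \<Rightarrow> 'k. (sl (Inr 0) f, sh f)" and G = "\<lambda>(x::('o + nat) list \<Rightarrow> 'k, g). cmb x g"])
  fix f :: "('o + nat) list \<Rightarrow> 'k" assume "f \<in> carrier (Balg \<alpha>)"
  then have f: "inB \<alpha> f" by (simp add: Balg_simps)
  then show "(sl (Inr 0) f, sh f) \<in> carrier (Balg \<beta>) \<times> carrier (Balg \<alpha>)"
    using s sh_in[OF s f] by (auto simp: Balg_simps sl_def inB_succ_iff[of \<alpha> \<beta> f])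
  show "(case (sl (Inr 0) f, sh f) of (x, g) \<Rightarrow> cmb x g) = f"
    by (rule ext, case_tac x rule: path_cases) (auto simp: sl_def)
next
  fix x :: "(('o + nat) list \<Rightarrow> 'k) \<times> (('o + nat) list \<Rightarrow> 'k)"
  assume "x \<in> carrier (Balg \<beta>) \<times> carrier (Balg \<alpha>)"
  then show "(case x of (x, g) \<Rightarrow> cmb x g) \<in> carrier (Balg \<alpha>)"
    using s by (auto simp: Balg_simps intro: cmb_in)
  show "(sl (Inr 0) (case x of (x, g) \<Rightarrow> cmb x g), sh (case x of (x, g) \<Rightarrow> cmb x g)) = x"
    apply (cases x)
    apply (auto simp: sl_def intro!: ext)
    apply (case_tac xa rule: path_cases)
       apply auto
    done
next
  show "(sl (Inr 0) \<one>\<^bsub>Balg \<alpha>\<^esub>, sh \<one>\<^bsub>Balg \<alpha>\<^esub>) = (\<one>\<^bsub>Balg \<beta>\<^esub>, \<one>\<^bsub>Balg \<alpha>\<^esub>)"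
    by (simp add: Balg_simps sh_unit[OF s] sl_unit_succ[OF s])
qed (simp_all add: Balg_simps sl_def sh_def smultB_def fun_eq_iff)


definition rp :: "'a \<Rightarrow> ('a list \<Rightarrow> 'k) \<Rightarrow> ('a list \<Rightarrow> 'k) \<Rightarrow> 'a list \<Rightarrow> 'k" where
  "rp t f x p = (if p \<noteq> [] \<and> hd p = t then x (tl p) else f p)"

lemma rp_simps [simp]: "rp t f x [] = f []" "rp t f x (s # q) = (if s = t then x q else f (s # q))"
  by (simp_all add: rp_def)

lemma sl_rp [simp]: "sl t (rp t f x) = x" by (simp add: sl_def rp_def)
lemma rp_rp [simp]: "rp t (rp t f x) y = rp t f y" by (simp add: rp_def fun_eq_iff)
lemma rp_sl [simp]: "rp t f (sl t f) = f" by (rule ext, case_tac x) (auto simp: sl_def)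

lemma slot_iso:
  fixes \<alpha> \<delta> \<gamma> :: "'o::wellorder" and t :: "'o + nat"
  assumes slin: "\<And>f::('o + nat) list \<Rightarrow> 'k::field. inB \<alpha> f \<Longrightarrow> inB \<delta> (sl t f)"
  and rpin: "\<And>f x::('o + nat) list \<Rightarrow> 'k. inB \<alpha> f \<Longrightarrow> inB \<delta> x \<Longrightarrow> inB \<alpha> (rp t f x)"
  and slu: "sl t (unitB \<alpha>) = (unitB \<delta> :: ('o + nat) list \<Rightarrow> 'k)"
  and rpu: "rp t (unitB \<alpha>) (unitB \<delta>) = (unitB \<alpha> :: ('o + nat) list \<Rightarrow> 'k)"
  and iso: "kalg_iso_prod (Balg \<delta> :: (('o + nat) list \<Rightarrow> 'k) ring) (Balg \<gamma>) (Balg \<delta>)"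
  shows "kalg_iso_prod (Balg \<alpha> :: (('o + nat) list \<Rightarrow> 'k) ring) (Balg \<gamma>) (Balg \<alpha>)"
proof -
  obtain h :: "(('o + nat) list \<Rightarrow> 'k) \<Rightarrow> (('o + nat) list \<Rightarrow> 'k) \<times> (('o + nat) list \<Rightarrow> 'k)"
    where h: "h \<in> ring_iso (Balg \<delta>) (RDirProd (Balg \<gamma>) (Balg \<delta>))"
    and hs: "\<And>(c::'k) (f::('o + nat) list \<Rightarrow> 'k). f \<in> carrier (Balg \<delta>) \<Longrightarrow> h (smultB c f) = (smultB c (fst (h f)), smultB c (snd (h f)))"
    using iso unfolding kalg_iso_prod_def by blast
  have hh: "h \<in> ring_hom (Balg \<delta>) (RDirProd (Balg \<gamma>) (Balg \<delta>))"
    and bij0: "bij_betw h (carrier (Balg \<delta>)) (carrier (RDirProd (Balg \<gamma>) (Balg \<delta>)))"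
    using h unfolding ring_iso_def by simp_all
  have hcar: "\<And>x. inB \<delta> x \<Longrightarrow> inB \<gamma> (fst (h x)) \<and> inB \<delta> (snd (h x))"
  proof -
    fix x :: "('o + nat) list \<Rightarrow> 'k" assume "inB \<delta> x"
    then have "h x \<in> carrier (RDirProd (Balg \<gamma>) (Balg \<delta>))"
      using ring_hom_memE(1)[OF hh] by (simp add: Balg_simps)
    then show "inB \<gamma> (fst (h x)) \<and> inB \<delta> (snd (h x))"
      unfolding RDP_simps Balg_simps by (simp add: mem_Times_iff)
  qed
  have hmul: "\<And>x y. inB \<delta> x \<Longrightarrow> inB \<delta> y \<Longrightarrow> h (\<lambda>p. x p * y p) = ((\<lambda>p. fst (h x) p * fst (h y) p), (\<lambda>p. snd (h x) p * snd (h y) p))"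
  proof -
    fix x y :: "('o + nat) list \<Rightarrow> 'k" assume "inB \<delta> x" "inB \<delta> y"
    then have "h (x \<otimes>\<^bsub>Balg \<delta>\<^esub> y) = h x \<otimes>\<^bsub>RDirProd (Balg \<gamma>) (Balg \<delta>)\<^esub> h y"
      using ring_hom_memE(2)[OF hh] by (simp add: Balg_simps)
    then show "h (\<lambda>p. x p * y p) = ((\<lambda>p. fst (h x) p * fst (h y) p), (\<lambda>p. snd (h x) p * snd (h y) p))"
      unfolding RDP_simps Balg_simps .
  qed
  have hadd: "\<And>x y. inB \<delta> x \<Longrightarrow> inB \<delta> y \<Longrightarrow> h (\<lambda>p. x p + y p) = ((\<lambda>p. fst (h x) p + fst (h y) p), (\<lambda>p. snd (h x) p + snd (h y) p))"
  proof -
    fix x y :: "('o + nat) list \<Rightarrow> 'k" assume "inB \<delta> x" "inB \<delta> y"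
    then have "h (x \<oplus>\<^bsub>Balg \<delta>\<^esub> y) = h x \<oplus>\<^bsub>RDirProd (Balg \<gamma>) (Balg \<delta>)\<^esub> h y"
      using ring_hom_memE(3)[OF hh] by (simp add: Balg_simps)
    then show "h (\<lambda>p. x p + y p) = ((\<lambda>p. fst (h x) p + fst (h y) p), (\<lambda>p. snd (h x) p + snd (h y) p))"
      unfolding RDP_simps Balg_simps .
  qed
  have hone: "h (unitB \<delta>) = (unitB \<gamma>, unitB \<delta>)"
    using ring_hom_memE(4)[OF hh] unfolding RDP_simps Balg_simps .
  have bij: "bij_betw h {x. inB \<delta> x} ({x. inB \<gamma> x} \<times> {x. inB \<delta> x})"
    using bij0 unfolding RDP_simps Balg_simps .
  define hi where "hi = inv_into {x. inB \<delta> x} h"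
  have hi_in: "\<And>y::(('o + nat) list \<Rightarrow> 'k) \<times> (('o + nat) list \<Rightarrow> 'k). y \<in> {x. inB \<gamma> x} \<times> {x. inB \<delta> x} \<Longrightarrow> inB \<delta> (hi y)"
  proof -
    fix y :: "(('o + nat) list \<Rightarrow> 'k) \<times> (('o + nat) list \<Rightarrow> 'k)" assume "y \<in> {x. inB \<gamma> x} \<times> {x. inB \<delta> x}"
    then have "y \<in> h ` {x. inB \<delta> x}" using bij unfolding bij_betw_def by simp
    then have "inv_into {x. inB \<delta> x} h y \<in> {x. inB \<delta> x}" by (rule inv_into_into)
    then show "inB \<delta> (hi y)" unfolding hi_def by simp
  qed
  have h_hi: "\<And>y::(('o + nat) list \<Rightarrow> 'k) \<times> (('o + nat) list \<Rightarrow> 'k). y \<in> {x. inB \<gamma> x} \<times> {x. inB \<delta> x} \<Longrightarrow> h (hi y) = y"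
    unfolding hi_def by (rule bij_betw_inv_into_right[OF bij])
  have hi_h: "\<And>x. inB \<delta> x \<Longrightarrow> hi (h x) = x"
    unfolding hi_def by (rule bij_betw_inv_into_left[OF bij]) simp
  show ?thesis
  proof (rule kalg_isoI[where H = "\<lambda>f::('o + nat) list \<Rightarrow> 'k. (fst (h (sl t f)), rp t f (snd (h (sl t f))))"
        and G = "\<lambda>(b::('o + nat) list \<Rightarrow> 'k, g). rp t g (hi (b, sl t g))"])
    fix f :: "('o + nat) list \<Rightarrow> 'k" assume "f \<in> carrier (Balg \<alpha>)"
    then have f: "inB \<alpha> f" by (simp add: Balg_simps)
    then show "(fst (h (sl t f)), rp t f (snd (h (sl t f)))) \<in> carrier (Balg \<gamma>) \<times> carrier (Balg \<alpha>)"
      using hcar slin rpin by (simp add: Balg_simps)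
    have "inB \<delta> (sl t f)" using slin f by blast
    then show "(case (fst (h (sl t f)), rp t f (snd (h (sl t f)))) of (b, g) \<Rightarrow> rp t g (hi (b, sl t g))) = f"
      by (simp add: hi_h)
    fix g :: "('o + nat) list \<Rightarrow> 'k" assume "g \<in> carrier (Balg \<alpha>)"
    then have g: "inB \<alpha> g" by (simp add: Balg_simps)
    have sf: "inB \<delta> (sl t f)" "inB \<delta> (sl t g)" using slin f g by blast+
    have e1: "sl t (\<lambda>p. f p * g p) = (\<lambda>p. sl t f p * sl t g p)" "sl t (\<lambda>p. f p + g p) = (\<lambda>p. sl t f p + sl t g p)"
      by (simp_all add: sl_def)
    have e2: "\<And>x y. rp t (\<lambda>p. f p * g p) (\<lambda>p. x p * y p) = (\<lambda>p. rp t f x p * rp t g y p)"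
      "\<And>x y. rp t (\<lambda>p. f p + g p) (\<lambda>p. x p + y p) = (\<lambda>p. rp t f x p + rp t g y p)"
      by (simp_all add: rp_def fun_eq_iff)
    show "(fst (h (sl t (f \<otimes>\<^bsub>Balg \<alpha>\<^esub> g))), rp t (f \<otimes>\<^bsub>Balg \<alpha>\<^esub> g) (snd (h (sl t (f \<otimes>\<^bsub>Balg \<alpha>\<^esub> g))))) =
      (fst (fst (h (sl t f)), rp t f (snd (h (sl t f)))) \<otimes>\<^bsub>Balg \<gamma>\<^esub> fst (fst (h (sl t g)), rp t g (snd (h (sl t g)))),
       snd (fst (h (sl t f)), rp t f (snd (h (sl t f)))) \<otimes>\<^bsub>Balg \<alpha>\<^esub> snd (fst (h (sl t g)), rp t g (snd (h (sl t g)))))"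
      by (simp add: Balg_simps e1 e2 hmul[OF sf])
    show "(fst (h (sl t (f \<oplus>\<^bsub>Balg \<alpha>\<^esub> g))), rp t (f \<oplus>\<^bsub>Balg \<alpha>\<^esub> g) (snd (h (sl t (f \<oplus>\<^bsub>Balg \<alpha>\<^esub> g))))) =
      (fst (fst (h (sl t f)), rp t f (snd (h (sl t f)))) \<oplus>\<^bsub>Balg \<gamma>\<^esub> fst (fst (h (sl t g)), rp t g (snd (h (sl t g)))),
       snd (fst (h (sl t f)), rp t f (snd (h (sl t f)))) \<oplus>\<^bsub>Balg \<alpha>\<^esub> snd (fst (h (sl t g)), rp t g (snd (h (sl t g)))))"
      by (simp add: Balg_simps e1 e2 hadd[OF sf])
  next
    show "(fst (h (sl t \<one>\<^bsub>Balg \<alpha>\<^esub>)), rp t \<one>\<^bsub>Balg \<alpha>\<^esub> (snd (h (sl t \<one>\<^bsub>Balg \<alpha>\<^esub>)))) = (\<one>\<^bsub>Balg \<gamma>\<^esub>, \<one>\<^bsub>Balg \<alpha>\<^esub>)"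
      by (simp add: Balg_simps slu hone rpu)
  next
    fix x :: "(('o + nat) list \<Rightarrow> 'k) \<times> (('o + nat) list \<Rightarrow> 'k)"
    assume x: "x \<in> carrier (Balg \<gamma>) \<times> carrier (Balg \<alpha>)"
    obtain b g where xbg: "x = (b, g)" by fastforce
    with x have b: "inB \<gamma> b" and g: "inB \<alpha> g" by (auto simp: Balg_simps)
    have y: "(b, sl t g) \<in> {x. inB \<gamma> x} \<times> {x. inB \<delta> x}" using b g slin by auto
    show "(case x of (b, g) \<Rightarrow> rp t g (hi (b, sl t g))) \<in> carrier (Balg \<alpha>)"
      using xbg rpin[OF g hi_in[OF y]] by (simp add: Balg_simps)
    show "(fst (h (sl t (case x of (b, g) \<Rightarrow> rp t g (hi (b, sl t g))))),
         rp t (case x of (b, g) \<Rightarrow> rp t g (hi (b, sl t g))) (snd (h (sl t (case x of (b, g) \<Rightarrow> rp t g (hi (b, sl t g))))))) = x"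
      using xbg h_hi[OF y] by simp
  next
    fix c and f :: "('o + nat) list \<Rightarrow> 'k" assume "f \<in> carrier (Balg \<alpha>)"
    then have f: "inB \<alpha> f" by (simp add: Balg_simps)
    have sf: "sl t f \<in> carrier (Balg \<delta>)" using slin f by (simp add: Balg_simps)
    have e: "sl t (smultB c f) = smultB c (sl t f)" by (simp add: sl_def smultB_def)
    have e2: "\<And>x. rp t (smultB c f) (smultB c x) = smultB c (rp t f x)"
      by (simp add: rp_def smultB_def fun_eq_iff)
    show "(fst (h (sl t (smultB c f))), rp t (smultB c f) (snd (h (sl t (smultB c f))))) =
         (smultB c (fst (fst (h (sl t f)), rp t f (snd (h (sl t f))))), smultB c (snd (fst (h (sl t f)), rp t f (snd (h (sl t f))))))"
      by (simp add: e e2 hs[OF sf])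
  qed
qed


lemma sl_in_succ: "is_succ_of \<alpha> \<delta> \<Longrightarrow> inB \<alpha> f \<Longrightarrow> inB \<delta> (sl (Inr m) f)"
  by (simp add: inB_succ_iff sl_def)

lemma sl_in_limit: "is_limit_ord \<alpha> \<Longrightarrow> d < \<alpha> \<Longrightarrow> inB \<alpha> f \<Longrightarrow> inB d (sl (Inl d) f)"
  by (simp add: inB_limit_iff sl_def)

lemma rp_unit_succ: "is_succ_of \<alpha> \<delta> \<Longrightarrow> rp (Inr m) (unitB \<alpha>) (unitB \<delta>) = unitB \<alpha>"
  by (rule ext, case_tac x) (auto simp: unitB_def leaf_Inr_succ)

lemma rp_unit_limit: "is_limit_ord \<alpha> \<Longrightarrow> d < \<alpha> \<Longrightarrow> rp (Inl d) (unitB \<alpha>) (unitB d) = unitB \<alpha>"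
  by (rule ext, case_tac x) (auto simp: unitB_def leaf_Inl_limit)

lemma rp_in_succ:
  assumes s: "is_succ_of \<alpha> \<beta>" and f: "inB \<alpha> f" and x: "inB \<beta> x"
  shows "inB \<alpha> (rp (Inr m0) f x)"
proof -
  from f s obtain c where sup: "\<forall>p. \<not> leaf \<alpha> p \<longrightarrow> f p = 0" and sl: "\<forall>m. inB \<beta> (\<lambda>p. f (Inr m # p))"
    and fin: "finite {m::nat. (\<lambda>p. f (Inr m # p)) \<noteq> (\<lambda>p. c * unitB \<beta> p)}"
    by (auto simp: inB_succ_iff)
  have "{m::nat. (\<lambda>p. rp (Inr m0) f x (Inr m # p)) \<noteq> (\<lambda>p. c * unitB \<beta> p)}
       \<subseteq> insert m0 {m::nat. (\<lambda>p. f (Inr m # p)) \<noteq> (\<lambda>p. c * unitB \<beta> p)}"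
    by auto
  then have "finite {m::nat. (\<lambda>p. rp (Inr m0) f x (Inr m # p)) \<noteq> (\<lambda>p. c * unitB \<beta> p)}"
    using fin by (meson finite.insertI finite_subset)
  moreover have "\<forall>p. \<not> leaf \<alpha> p \<longrightarrow> rp (Inr m0) f x p = 0"
  proof (intro allI impI)
    fix p assume "\<not> leaf \<alpha> p" then show "rp (Inr m0) f x p = 0"
      by (cases p) (use sup s x in \<open>auto simp: leaf_Inr_succ inB_support\<close>)
  qed
  moreover have "\<forall>m. inB \<beta> (\<lambda>p. rp (Inr m0) f x (Inr m # p))"
  proof
    fix m show "inB \<beta> (\<lambda>p. rp (Inr m0) f x (Inr m # p))"
      by (cases "m = m0") (use x sl in auto)
  qed
  ultimately show ?thesis using s by (auto simp: inB_succ_iff)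
qed

lemma rp_in_limit:
  assumes s: "is_limit_ord \<alpha>" and d: "d < \<alpha>" and f: "inB \<alpha> f" and x: "inB d x"
  shows "inB \<alpha> (rp (Inl d) f x)"
proof -
  from f s obtain c where sup: "\<forall>p. \<not> leaf \<alpha> p \<longrightarrow> f p = 0" and sl: "\<forall>\<beta><\<alpha>. inB \<beta> (\<lambda>p. f (Inl \<beta> # p))"
    and fin: "finite {\<beta>. \<beta> < \<alpha> \<and> (\<lambda>p. f (Inl \<beta> # p)) \<noteq> (\<lambda>p. c * unitB \<beta> p)}"
    by (auto simp: inB_limit_iff)
  have "{\<beta>. \<beta> < \<alpha> \<and> (\<lambda>p. rp (Inl d) f x (Inl \<beta> # p)) \<noteq> (\<lambda>p. c * unitB \<beta> p)}
       \<subseteq> insert d {\<beta>. \<beta> < \<alpha> \<and> (\<lambda>p. f (Inl \<beta> # p)) \<noteq> (\<lambda>p. c * unitB \<beta> p)}"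
    by auto
  then have "finite {\<beta>. \<beta> < \<alpha> \<and> (\<lambda>p. rp (Inl d) f x (Inl \<beta> # p)) \<noteq> (\<lambda>p. c * unitB \<beta> p)}"
    using fin by (meson finite.insertI finite_subset)
  moreover have "\<forall>p. \<not> leaf \<alpha> p \<longrightarrow> rp (Inl d) f x p = 0"
  proof (intro allI impI)
    fix p assume "\<not> leaf \<alpha> p" then show "rp (Inl d) f x p = 0"
      by (cases p) (use sup s d x in \<open>auto simp: leaf_Inl_limit inB_support\<close>)
  qed
  moreover have "\<forall>\<beta><\<alpha>. inB \<beta> (\<lambda>p. rp (Inl d) f x (Inl \<beta> # p))"
  proof (intro allI impI)
    fix \<beta> assume "\<beta> < \<alpha>" then show "inB \<beta> (\<lambda>p. rp (Inl d) f x (Inl \<beta> # p))"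
      by (cases "\<beta> = d") (use x sl in auto)
  qed
  ultimately show ?thesis using s by (auto simp: inB_limit_iff)
qed

lemma slot_succ:
  assumes s: "is_succ_of \<alpha> \<delta>"
  and iso: "kalg_iso_prod (Balg \<delta> :: (('o::wellorder + nat) list \<Rightarrow> 'k::field) ring) (Balg \<gamma>) (Balg \<delta>)"
  shows "kalg_iso_prod (Balg \<alpha> :: (('o + nat) list \<Rightarrow> 'k) ring) (Balg \<gamma>) (Balg \<alpha>)"
  by (rule slot_iso[where t = "Inr 0" and \<delta> = \<delta>])
     (use s iso in \<open>auto intro: sl_in_succ rp_in_succ sl_unit_succ rp_unit_succ\<close>)

lemma slot_limit:
  assumes s: "is_limit_ord \<alpha>" and d: "d < \<alpha>"
  and iso: "kalg_iso_prod (Balg d :: (('o::wellorder + nat) list \<Rightarrow> 'k::field) ring) (Balg \<gamma>) (Balg d)"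
  shows "kalg_iso_prod (Balg \<alpha> :: (('o + nat) list \<Rightarrow> 'k) ring) (Balg \<gamma>) (Balg \<alpha>)"
  by (rule slot_iso[where t = "Inl d" and \<delta> = d])
     (use s d iso in \<open>auto intro: sl_in_limit rp_in_limit sl_unit_limit rp_unit_limit\<close>)

lemma part2:
  "plus_nat_ord \<gamma> n \<alpha> \<Longrightarrow> 0 < n \<Longrightarrow>
   kalg_iso_prod (Balg \<alpha> :: (('o::wellorder + nat) list \<Rightarrow> 'k::field) ring) (Balg \<gamma>) (Balg \<alpha>)"
proof (induct rule: plus_nat_ord.induct)
  case (1 \<gamma>)
  then show ?case by simp
next
  case (2 \<gamma> n \<delta> \<alpha>)
  show ?case
  proof (cases "n = 0")
    case True
    with 2 have "\<delta> = \<gamma>" by (auto elim: plus_nat_ord.cases)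
    with 2 show ?thesis by (simp add: shift_iso)
  next
    case False
    with 2 show ?thesis by (auto intro: slot_succ)
  qed
qed

lemma part3:
  assumes l: "is_limit_ord \<alpha>" and b: "\<beta> < \<alpha>"
  shows "kalg_iso_prod (Balg \<alpha> :: (('o::wellorder + nat) list \<Rightarrow> 'k::field) ring) (Balg \<beta>) (Balg \<alpha>)"
proof -
  define s where "s = (LEAST x. \<beta> < x)"
  have bs: "\<beta> < s" unfolding s_def using b by (rule LeastI)
  have sa: "s \<le> \<alpha>" unfolding s_def using b by (rule Least_le)
  have succ: "is_succ_of s \<beta>" unfolding is_succ_of_def s_def
    using bs Least_le s_def by blast
  then have "s \<noteq> \<alpha>" using l limit_not_succ by blast
  with sa have "s < \<alpha>" by simp
  then show ?thesis using slot_limit[OF l _ shift_iso[OF succ]] by blast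
qed

theorem lemma6p9:
  fixes \<alpha> \<beta> \<gamma> :: "'o::wellorder" and n :: nat
  shows "(countable_ord \<alpha> \<and> is_succ_of \<alpha> \<beta> \<longrightarrow>
            kalg_iso_prod (Balg \<alpha> :: (('o + nat) list \<Rightarrow> 'k::field) ring) (Balg \<beta>) (Balg \<alpha>))
       \<and> (countable_ord \<alpha> \<and> 0 < n \<and> plus_nat_ord \<gamma> n \<alpha> \<longrightarrow>
            kalg_iso_prod (Balg \<alpha> :: (('o + nat) list \<Rightarrow> 'k::field) ring) (Balg \<gamma>) (Balg \<alpha>))
       \<and> (countable_ord \<alpha> \<and> is_limit_ord \<alpha> \<and> \<beta> < \<alpha> \<longrightarrow>
            kalg_iso_prod (Balg \<alpha> :: (('o + nat) list \<Rightarrow> 'k::field) ring) (Balg \<beta>) (Balg \<alpha>))"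
  using shift_iso part2 part3 by blast

end
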